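(* For positive integers $f,l$ consider the hypercube Hamiltonian $H=\sum_{C}\bigl(\sum_{i\in C}S_i-M_C\bigr)^2$ with integers $M_C$ (notation as in the context), and let $n_{ze}$ be the number of zero energy assignments. (i) If $n_{ze}>0$, then the number of global minima of $H$ equals $n_{ze}$. (ii) There is an absolute constant $c>0$ such that for all positive integers $f,l$ there exists a choice of integers $(M_C)_C$ with $$n_{ze}\geq 2^N\Bigl(\frac{c}{f\sqrt{l}}\Bigr)^{n_C}.$$
   Context: Fix positive integers $f,l$ and let $N=l^f$. The variables $S_i\in\{-1,+1\}$ are indexed by vectors $i=(x_1,\dots,x_f)$ with $x_a\in\{1,\dots,l\}$. A column $C$ is specified by an index $b\in\{1,\dots,f\}$ and integers $y_a\in\{1,\dots,l\}$ for all $a\neq b$; a variable $(x_1,\dots,x_f)$ lies in $C$ iff $x_a=y_a$ for all $a\neq b$. The number of columns is $n_C=f\,l^{f-1}$. Given an integer $M_C$ for each column, $H(S)=\sum_C\bigl(\sum_{i\in C}S_i-M_C\bigr)^2$. A zero energy assignment is an $S$ with $\sum_{i\in C}S_i=M_C$ for every column $C$. A global minimum is an assignment minimizing $H$. *)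

theory Defs
  imports Complex_Main "HOL-Library.FuncSet"
begin

text \<open>Sites: vectors (x_1,...,x_f) with coordinates in {1..l}, encoded 0-based as
  lists of length f with entries < l.\<close>
definition sites :: "nat \<Rightarrow> nat \<Rightarrow> nat list set" where
  "sites f l = {xs. length xs = f \<and> (\<forall>a<f. xs ! a < l)}"

text \<open>A column is a pair (b, ys): direction b < f and the fixed coordinates ys!a for a \<noteq> b;
  the unused entry ys!b is normalised to 0, so columns correspond bijectively to the
  f * l^(f-1) choices in the paper.\<close>
definition columns :: "nat \<Rightarrow> nat \<Rightarrow> (nat \<times> nat list) set" where
  "columns f l = {(b, ys). b < f \<and> length ys = f \<and> ys ! b = 0 \<and>
                           (\<forall>a<f. a \<noteq> b \<longrightarrow> ys ! a < l)}"

definition col_sites :: "nat \<Rightarrow> nat \<Rightarrow> nat \<times> nat list \<Rightarrow> nat list set" where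
  "col_sites f l C = {xs \<in> sites f l. \<forall>a<f. a \<noteq> fst C \<longrightarrow> xs ! a = snd C ! a}"

definition assignments :: "nat \<Rightarrow> nat \<Rightarrow> (nat list \<Rightarrow> int) set" where
  "assignments f l = PiE (sites f l) (\<lambda>_. {-1, 1})"

definition hamiltonian ::
  "nat \<Rightarrow> nat \<Rightarrow> (nat \<times> nat list \<Rightarrow> int) \<Rightarrow> (nat list \<Rightarrow> int) \<Rightarrow> int" where
  "hamiltonian f l M S = (\<Sum>C\<in>columns f l. ((\<Sum>i\<in>col_sites f l C. S i) - M C)^2)"

definition zero_energy ::
  "nat \<Rightarrow> nat \<Rightarrow> (nat \<times> nat list \<Rightarrow> int) \<Rightarrow> (nat list \<Rightarrow> int) set" where
  "zero_energy f l M = {S \<in> assignments f l.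
      \<forall>C\<in>columns f l. (\<Sum>i\<in>col_sites f l C. S i) = M C}"

definition global_minima ::
  "nat \<Rightarrow> nat \<Rightarrow> (nat \<times> nat list \<Rightarrow> int) \<Rightarrow> (nat list \<Rightarrow> int) set" where
  "global_minima f l M = {S \<in> assignments f l.
      \<forall>T\<in>assignments f l. hamiltonian f l M S \<le> hamiltonian f l M T}"

end

theory Submission
  imports Defs
begin


lemma sites_eq: "sites f l = {xs. set xs \<subseteq> {..<l} \<and> length xs = f}"
  unfolding sites_def apply (auto simp: in_set_conv_nth) using nth_mem by fastforce

lemma finite_sites: "finite (sites f l)"
  unfolding sites_eq by (rule finite_lists_length_eq) simp

lemma card_sites: "card (sites f l) = l ^ f"
  unfolding sites_eq by (subst card_lists_length_eq) simp_all

lemma finite_assignments: "finite (assignments f l)"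
  unfolding assignments_def by (intro finite_PiE finite_sites) simp

lemma card_assignments: "card (assignments f l) = 2 ^ (l ^ f)"
  unfolding assignments_def by (simp add: card_PiE finite_sites card_sites numeral_2_eq_2)

lemma columns_sub: "l > 0 \<Longrightarrow> columns f l \<subseteq> {..<f} \<times> sites f l"
  unfolding columns_def sites_def by auto

lemma finite_columns: "l > 0 \<Longrightarrow> finite (columns f l)"
  by (rule finite_subset[OF columns_sub]) (auto simp: finite_sites)

lemma finite_col_sites: "finite (col_sites f l C)"
  unfolding col_sites_def using finite_sites by auto

lemma card_col_sites: assumes "C \<in> columns f l" shows "card (col_sites f l C) \<le> l"
proof -
  obtain b ys where C: "C = (b, ys)" by force
  have b: "b < f" using assms C unfolding columns_def by auto
  have "inj_on (\<lambda>xs. xs ! b) (col_sites f l C)"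
  proof (rule inj_onI)
    fix xs zs assume xs: "xs \<in> col_sites f l C" and zs: "zs \<in> col_sites f l C" and e: "xs ! b = zs ! b"
    show "xs = zs"
    proof (rule nth_equalityI)
      show "length xs = length zs" using xs zs unfolding col_sites_def sites_def by auto
      fix i assume "i < length xs"
      then show "xs ! i = zs ! i" using xs zs e C unfolding col_sites_def sites_def
        by (cases "i = b") auto
    qed
  qed
  moreover have "(\<lambda>xs. xs ! b) ` col_sites f l C \<subseteq> {..<l}"
    using b unfolding col_sites_def sites_def by auto
  ultimately have "card (col_sites f l C) \<le> card {..<l}" by (intro card_inj_on_le) auto
  then show ?thesis by simp
qed

lemma card_columns: assumes "l > 0" shows "card (columns f l) \<le> f * l ^ (f - 1)"
proof -
  let ?T = "\<lambda>b. {ys. length ys = f \<and> ys ! b = 0 \<and> (\<forall>a<f. a \<noteq> b \<longrightarrow> ys ! a < l)}"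
  have eq: "columns f l = (\<Union>b<f. (\<lambda>ys. (b, ys)) ` ?T b)"
  proof
    show "columns f l \<subseteq> (\<Union>b<f. (\<lambda>ys. (b, ys)) ` ?T b)"
    proof
      fix C assume "C \<in> columns f l"
      then obtain b ys where "C = (b, ys)" "b < f" "ys \<in> ?T b" unfolding columns_def by auto
      then show "C \<in> (\<Union>b<f. (\<lambda>ys. (b, ys)) ` ?T b)" by blast
    qed
    show "(\<Union>b<f. (\<lambda>ys. (b, ys)) ` ?T b) \<subseteq> columns f l"
    proof
      fix C assume "C \<in> (\<Union>b<f. (\<lambda>ys. (b, ys)) ` ?T b)"
      then obtain b ys where "C = (b, ys)" "b < f" "ys \<in> ?T b" by blast
      then show "C \<in> columns f l" unfolding columns_def by simp
    qed
  qed
  have T: "card (?T b) \<le> l ^ (f - 1)" if b: "b < f" for b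
  proof -
    let ?g = "\<lambda>ys::nat list. take b ys @ drop (Suc b) ys"
    have "inj_on ?g (?T b)"
    proof (rule inj_onI)
      fix xs zs assume xs: "xs \<in> ?T b" and zs: "zs \<in> ?T b" and e: "?g xs = ?g zs"
      show "xs = zs"
      proof (rule nth_equalityI)
        show "length xs = length zs" using xs zs by auto
        fix i assume i: "i < length xs"
        have lx: "length xs = f" and lz: "length zs = f" using xs zs by auto
        consider "i < b" | "i = b" | "i > b" by linarith
        then show "xs ! i = zs ! i"
        proof cases
          case 1
          have "?g xs ! i = xs ! i" "?g zs ! i = zs ! i" using 1 b lx lz by (auto simp: nth_append)
          then show ?thesis using e by simp
        next
          case 2 then show ?thesis using xs zs by auto
        next
          case 3
          have "?g xs ! (i - 1) = xs ! i" "?g zs ! (i - 1) = zs ! i"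
            using 3 b lx lz i by (auto simp: nth_append min_def)
          then show ?thesis using e by simp
        qed
      qed
    qed
    moreover have "?g ` ?T b \<subseteq> {xs. set xs \<subseteq> {..<l} \<and> length xs = f - 1}"
    proof (rule image_subsetI)
      fix ys assume ys: "ys \<in> ?T b"
      show "?g ys \<in> {xs. set xs \<subseteq> {..<l} \<and> length xs = f - 1}"
        unfolding mem_Collect_eq
      proof
        show "length (?g ys) = f - 1" using ys b by auto
        show "set (?g ys) \<subseteq> {..<l}"
        proof
          fix x assume "x \<in> set (?g ys)"
          then have "x \<in> set (take b ys) \<or> x \<in> set (drop (Suc b) ys)" by auto
          then show "x \<in> {..<l}"
          proof
            assume "x \<in> set (take b ys)"
            then obtain i where "i < length (take b ys)" "take b ys ! i = x" by (auto simp: in_set_conv_nth)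
            then show ?thesis using ys b by (auto simp: nth_take)
          next
            assume "x \<in> set (drop (Suc b) ys)"
            then obtain i where "i < length (drop (Suc b) ys)" "drop (Suc b) ys ! i = x" by (auto simp: in_set_conv_nth)
            then have i: "Suc b + i < f" "x = ys ! (Suc b + i)" using ys by auto
            have "\<forall>a<f. a \<noteq> b \<longrightarrow> ys ! a < l" using ys by simp
            then have "ys ! (Suc b + i) < l" using i(1) by simp
            then show ?thesis using i(2) by simp
          qed
        qed
      qed
    qed
    ultimately have "card (?T b) \<le> card {xs. set xs \<subseteq> {..<l} \<and> length xs = f - 1}"
      by (intro card_inj_on_le) (auto intro: finite_lists_length_eq)
    then show ?thesis by (simp add: card_lists_length_eq)
  qed
  have "card (columns f l) \<le> (\<Sum>b<f. card ((\<lambda>ys. (b, ys)) ` ?T b))"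
    unfolding eq by (rule card_UN_le) simp
  also have "\<dots> \<le> (\<Sum>b<f. l ^ (f - 1))"
  proof (intro sum_mono order.trans[OF card_image_le T])
    fix b assume "b \<in> {..<f}"
    have "?T b \<subseteq> sites f l"
    proof
      fix ys assume ys: "ys \<in> ?T b"
      have "ys ! a < l" if "a < f" for a
        using ys assms that by (cases "a = b") auto
      then show "ys \<in> sites f l" using ys unfolding sites_def by auto
    qed
    then show "finite (?T b)" using finite_sites finite_subset by blast
  qed simp
  finally show ?thesis by simp
qed



lemma ham_nonneg: "hamiltonian f l M S \<ge> 0"
  unfolding hamiltonian_def by (intro sum_nonneg) simp

lemma ham_zero: assumes "l > 0"
  shows "hamiltonian f l M S = 0 \<longleftrightarrow> (\<forall>C\<in>columns f l. (\<Sum>i\<in>col_sites f l C. S i) = M C)"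
  unfolding hamiltonian_def using finite_columns[OF assms]
  by (subst sum_nonneg_eq_0_iff) auto

lemma part1: assumes "l > 0" "zero_energy f l M \<noteq> {}"
  shows "global_minima f l M = zero_energy f l M"
proof
  obtain T where T: "T \<in> zero_energy f l M" using assms by blast
  then have T0: "hamiltonian f l M T = 0" using ham_zero[OF assms(1)] unfolding zero_energy_def by auto
  show "global_minima f l M \<subseteq> zero_energy f l M"
  proof
    fix S assume S: "S \<in> global_minima f l M"
    then have "hamiltonian f l M S \<le> 0" using T T0 unfolding global_minima_def zero_energy_def by force
    then have "hamiltonian f l M S = 0" using ham_nonneg[of f l M S] by linarith
    then show "S \<in> zero_energy f l M" using S ham_zero[OF assms(1)]
      unfolding global_minima_def zero_energy_def by auto
  qed
  show "zero_energy f l M \<subseteq> global_minima f l M"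
  proof
    fix S assume S: "S \<in> zero_energy f l M"
    then have "hamiltonian f l M S = 0" using ham_zero[OF assms(1)] unfolding zero_energy_def by auto
    then show "S \<in> global_minima f l M" using S ham_nonneg unfolding global_minima_def zero_energy_def
      by auto
  qed
qed

lemma assign_val: "S \<in> assignments f l \<Longrightarrow> i \<in> sites f l \<Longrightarrow> S i = -1 \<or> S i = 1"
  unfolding assignments_def by (auto dest: PiE_mem)

lemma flip_zero:
  assumes i: "i \<in> sites f l" and ij: "i \<noteq> j"
  shows "(\<Sum>S\<in>assignments f l. S i * S j) = (0::int)"
proof -
  let ?A = "assignments f l"
  let ?p = "\<lambda>S::nat list \<Rightarrow> int. S(i := - S i)"
  have mem: "?p S \<in> ?A" if "S \<in> ?A" for S
    using that i unfolding assignments_def by (auto simp: PiE_iff extensional_def)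
  have bij: "bij_betw ?p ?A ?A"
    by (rule bij_betwI[where g = ?p]) (auto intro: mem)
  have "(\<Sum>S\<in>?A. S i * S j) = (\<Sum>S\<in>?A. ?p S i * ?p S j)"
    using sum.reindex_bij_betw[OF bij, of "\<lambda>S. S i * S j"] by simp
  also have "\<dots> = - (\<Sum>S\<in>?A. S i * S j)"
    using ij by (simp add: sum_negf)
  finally show ?thesis by simp
qed

lemma second_moment:
  assumes C: "C \<in> columns f l"
  shows "(\<Sum>S\<in>assignments f l. (\<Sum>i\<in>col_sites f l C. S i)^2)
         = int (card (col_sites f l C)) * int (card (assignments f l))"
proof -
  let ?A = "assignments f l" and ?K = "col_sites f l C"
  have Ks: "?K \<subseteq> sites f l" unfolding col_sites_def by auto
  have inner: "(\<Sum>S\<in>?A. S i * S j) = (if i = j then int (card ?A) else 0)"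
    if "i \<in> ?K" "j \<in> ?K" for i j
  proof (cases "i = j")
    case True
    have "(\<Sum>S\<in>?A. S i * S i) = (\<Sum>S\<in>?A. 1)"
    proof (rule sum.cong[OF refl])
      fix S assume "S \<in> ?A"
      then have "S i = -1 \<or> S i = 1" using assign_val Ks that by blast
      then show "S i * S i = 1" by auto
    qed
    then show ?thesis using True by simp
  next
    case False then show ?thesis using flip_zero Ks that by auto
  qed
  have "(\<Sum>S\<in>?A. (\<Sum>i\<in>?K. S i)^2) = (\<Sum>S\<in>?A. \<Sum>i\<in>?K. \<Sum>j\<in>?K. S i * S j)"
    by (simp add: power2_eq_square sum_product)
  also have "\<dots> = (\<Sum>i\<in>?K. \<Sum>j\<in>?K. \<Sum>S\<in>?A. S i * S j)"
    by (simp add: sum.swap[of _ ?A] sum.swap[of _ ?A ?K])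
  also have "\<dots> = (\<Sum>i\<in>?K. \<Sum>j\<in>?K. (if i = j then int (card ?A) else 0))"
    by (intro sum.cong refl inner)
  also have "\<dots> = (\<Sum>i\<in>?K. int (card ?A))"
    using finite_col_sites by (simp add: sum.delta)
  finally show ?thesis by simp
qed



definition gg :: "nat \<Rightarrow> int \<Rightarrow> real" where
  "gg k s = (real k)^2 / ((real k)^2 + (real_of_int s)^2)"

lemma gg_le1: assumes "k \<ge> 1" shows "gg k s \<le> 1"
proof -
  have "0 < (real k)^2 + (real_of_int s)^2" using assms by (intro add_pos_nonneg) auto
  then show ?thesis unfolding gg_def by (simp add: divide_le_eq_1)
qed

lemma gg_nonneg: "gg k s \<ge> 0"
  unfolding gg_def by simp

lemma gg_neg: "gg k (-s) = gg k s"
  unfolding gg_def by simp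

lemma U_Suc: "(\<Sum>s\<in>{-int (Suc n)..int (Suc n)}. gg k s) = (\<Sum>s\<in>{-int n..int n}. gg k s) + 2 * gg k (int n + 1)"
proof -
  have e: "{-int (Suc n)..int (Suc n)} = insert (int n + 1) (insert (-(int n + 1)) {-int n..int n})"
    by auto
  show ?thesis unfolding e using gg_neg[of k "int n + 1"] by simp
qed

lemma gg_tail: assumes "k \<ge> 1" "k \<le> n"
  shows "gg k (int n + 1) \<le> (real k)^2 / real n - (real k)^2 / real (Suc n)"
proof -
  have n: "real n > 0" using assms by simp
  have "gg k (int n + 1) \<le> (real k)^2 / (real n * real (Suc n))"
    unfolding gg_def
  proof (rule frac_le)
    show "0 < real n * real (Suc n)" using n by simp
    have "real n * real (Suc n) \<le> (real n + 1)^2" by (simp add: power2_eq_square algebra_simps)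
    then show "real n * real (Suc n) \<le> (real k)\<^sup>2 + (real_of_int (int n + 1))\<^sup>2"
      by (simp add: add_increasing)
  qed simp_all
  also have "\<dots> = (real k)^2 / real n - (real k)^2 / real (Suc n)"
    using n by (simp add: field_simps)
  finally show ?thesis .
qed

lemma U_bound_aux: assumes k: "k \<ge> 1"
  shows "(n \<le> k \<longrightarrow> (\<Sum>s\<in>{-int n..int n}. gg k s) \<le> 2 * real n + 1) \<and>
         (k \<le> n \<longrightarrow> (\<Sum>s\<in>{-int n..int n}. gg k s) \<le> 4 * real k + 1 - 2 * (real k)^2 / real n)"
proof (induction n)
  case 0
  then show ?case using k unfolding gg_def by simp
next
  case (Suc n)
  let ?U = "\<lambda>n. (\<Sum>s\<in>{-int n..int n}. gg k s)"
  have g1: "gg k (int n + 1) \<le> 1" using gg_le1 k by blast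
  show ?case
  proof (intro conjI impI)
    assume "Suc n \<le> k"
    then have "?U n \<le> 2 * real n + 1" using Suc.IH by simp
    then show "?U (Suc n) \<le> 2 * real (Suc n) + 1" using U_Suc[where n=n and k=k] g1 by simp
  next
    assume kn: "k \<le> Suc n"
    show "?U (Suc n) \<le> 4 * real k + 1 - 2 * (real k)^2 / real (Suc n)"
    proof (cases "k = Suc n")
      case True
      then have "?U n \<le> 2 * real n + 1" using Suc.IH by simp
      moreover have "2 * (real k)^2 / real (Suc n) = 2 * real k" using True by (simp add: power2_eq_square)
      ultimately show ?thesis using U_Suc[where n=n and k=k] g1 True by simp
    next
      case False
      then have kn': "k \<le> n" using kn by simp
      then have "?U n \<le> 4 * real k + 1 - 2 * (real k)^2 / real n" using Suc.IH by simp
      then show ?thesis using U_Suc[where n=n and k=k] gg_tail[OF k kn'] by simp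
    qed
  qed
qed

lemma U_bound: assumes k: "k \<ge> 1"
  shows "(\<Sum>s\<in>{-int n..int n}. gg k s) \<le> 5 * real k"
proof (cases "n \<le> k")
  case True
  then have "(\<Sum>s\<in>{-int n..int n}. gg k s) \<le> 2 * real n + 1" using U_bound_aux[OF k] by blast
  also have "\<dots> \<le> 5 * real k" using True k by simp
  finally show ?thesis .
next
  case False
  then have "(\<Sum>s\<in>{-int n..int n}. gg k s) \<le> 4 * real k + 1 - 2 * (real k)^2 / real n"
    using U_bound_aux[OF k] by simp
  also have "\<dots> \<le> 5 * real k"
  proof -
    have "2 * (real k)^2 / real n \<ge> 0" by simp
    moreover have "real k \<ge> 1" using k by simp
    ultimately show ?thesis by linarith
  qed
  finally show ?thesis .
qed

lemma prod_exp_bound: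
  fixes x :: "'a \<Rightarrow> real"
  assumes "finite I" "\<And>i. i \<in> I \<Longrightarrow> x i \<ge> 0"
  shows "(\<Prod>i\<in>I. 1 + x i) \<le> exp (\<Sum>i\<in>I. x i)"
proof -
  have "(\<Prod>i\<in>I. 1 + x i) \<le> (\<Prod>i\<in>I. exp (x i))"
    by (rule prod_mono) (use assms in \<open>auto simp: exp_ge_add_one_self add.commute\<close>)
  also have "\<dots> = exp (\<Sum>i\<in>I. x i)" by (simp add: exp_sum assms(1))
  finally show ?thesis .
qed



lemma gg_inv: assumes "k \<ge> 1"
  shows "1 / (1 + (real_of_int s)^2 / (real k)^2) = gg k s"
  using assms unfolding gg_def by (simp add: field_simps)

lemma sigma_bound:
  assumes S: "S \<in> assignments f l" and C: "C \<in> columns f l"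
  shows "\<bar>\<Sum>i\<in>col_sites f l C. S i\<bar> \<le> int l"
proof -
  have "\<bar>\<Sum>i\<in>col_sites f l C. S i\<bar> \<le> (\<Sum>i\<in>col_sites f l C. \<bar>S i\<bar>)" by (rule sum_abs)
  also have "\<dots> = (\<Sum>i\<in>col_sites f l C. 1)"
  proof (rule sum.cong[OF refl])
    fix i assume "i \<in> col_sites f l C"
    then have "i \<in> sites f l" unfolding col_sites_def by auto
    then have "S i = -1 \<or> S i = 1" using assign_val S by blast
    then show "\<bar>S i\<bar> = 1" by auto
  qed
  also have "\<dots> = int (card (col_sites f l C))" by simp
  also have "\<dots> \<le> int l" using card_col_sites[OF C] by simp
  finally show ?thesis .
qed

lemma part2:
  assumes f: "f > 0" and l: "l > 0"
  shows "\<exists>M. real (card (zero_energy f l M)) \<ge>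
           2 ^ (l ^ f) * ((1 / (10 * exp 12)) / (real f * sqrt (real l))) ^ (f * l ^ (f - 1))"
proof -
  define c :: real where "c = 1 / (10 * exp 12)"
  define k where "k = nat \<lfloor>sqrt (real l)\<rfloor>"
  have sl1: "sqrt (real l) \<ge> 1" using l by simp
  have fl0: "0 \<le> \<lfloor>sqrt (real l)\<rfloor>" using sl1 by simp
  have rk: "real k = of_int \<lfloor>sqrt (real l)\<rfloor>" unfolding k_def using fl0 by simp
  have ksl: "real k \<le> sqrt (real l)" using rk by simp
  have slk: "sqrt (real l) < real k + 1" using rk by simp
  have "real k > 0" using slk sl1 by linarith
  then have k1: "k \<ge> 1" by simp
  have rk1: "real k \<ge> 1" using k1 by simp
  have lk: "real l \<le> 4 * (real k)^2"
  proof -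
    have "sqrt (real l) \<le> 2 * real k" using slk rk1 by simp
    then have "(sqrt (real l))^2 \<le> (2 * real k)^2" by (rule power_mono) simp
    then show ?thesis by (simp add: power_mult_distrib)
  qed
  define A where "A = assignments f l"
  define Cs where "Cs = columns f l"
  define n where "n = card Cs"
  define N2 where "N2 = card A"
  define \<sigma> where "\<sigma> = (\<lambda>S::nat list \<Rightarrow> int. restrict (\<lambda>C. \<Sum>i\<in>col_sites f l C. S i) Cs)"
  define h where "h = (\<lambda>s::int. 1 + (real_of_int s)^2 / (real k)^2)"
  define w where "w = (\<lambda>M. \<Prod>C\<in>Cs. h (M C))"
  define K :: real where "K = 1 / (2 * (5 * real k) ^ n)"
  define G where "G = {S\<in>A. (\<Sum>C\<in>Cs. (\<sigma> S C)^2) \<le> 3 * int l * int n}"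
  define B where "B = {S\<in>A. real (card (zero_energy f l (\<sigma> S))) * w (\<sigma> S) < real N2 * K}"
  have Kpos: "K > 0" unfolding K_def using rk1 by simp
  have finA: "finite A" unfolding A_def by (rule finite_assignments)
  have finCs: "finite Cs" unfolding Cs_def using l by (rule finite_columns)
  have N2: "N2 = 2 ^ (l ^ f)" unfolding N2_def A_def by (rule card_assignments)
  have N2pos: "real N2 > 0" using N2 by simp
  have Cne: "(0, replicate f 0) \<in> Cs" unfolding Cs_def columns_def using f l by auto
  have "card Cs > 0" using finCs Cne by (auto simp: card_gt_0_iff)
  then have n1: "n \<ge> 1" unfolding n_def by simp
  have nE: "n \<le> f * l ^ (f - 1)" unfolding n_def Cs_def using l by (rule card_columns)
  have h1: "h s \<ge> 1" for s unfolding h_def by simp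
  have wpos: "w M > 0" for M unfolding w_def using h1
    by (intro prod_pos) (meson less_le_trans zero_less_one)
  have ZE_sup: "{T\<in>B. \<sigma> T = \<sigma> S} \<subseteq> zero_energy f l (\<sigma> S)" for S
  proof
    fix T assume T: "T \<in> {T\<in>B. \<sigma> T = \<sigma> S}"
    then have TA: "T \<in> A" and e: "\<sigma> T = \<sigma> S" unfolding B_def by auto
    show "T \<in> zero_energy f l (\<sigma> S)" unfolding zero_energy_def
    proof (intro CollectI conjI ballI)
      show "T \<in> assignments f l" using TA A_def by simp
      fix C assume C: "C \<in> columns f l"
      have "(\<Sum>i\<in>col_sites f l C. T i) = \<sigma> T C" using C unfolding \<sigma>_def Cs_def by simp
      then show "(\<Sum>i\<in>col_sites f l C. T i) = \<sigma> S C" using e by simp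
    qed
  qed
  have finZE: "finite (zero_energy f l M)" for M
    using finA unfolding A_def zero_energy_def by simp
  have tot: "(\<Sum>S\<in>A. \<Sum>C\<in>Cs. (\<sigma> S C)^2) \<le> int l * int n * int N2"
  proof -
    have "(\<Sum>S\<in>A. \<Sum>C\<in>Cs. (\<sigma> S C)^2) = (\<Sum>C\<in>Cs. \<Sum>S\<in>A. (\<sigma> S C)^2)" by (rule sum.swap)
    also have "\<dots> = (\<Sum>C\<in>Cs. int (card (col_sites f l C)) * int N2)"
    proof (rule sum.cong[OF refl])
      fix C assume C: "C \<in> Cs"
      have "(\<Sum>S\<in>A. (\<sigma> S C)^2) = (\<Sum>S\<in>A. (\<Sum>i\<in>col_sites f l C. S i)^2)"
        using C unfolding \<sigma>_def by simp
      also have "\<dots> = int (card (col_sites f l C)) * int N2"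
        using second_moment C unfolding A_def Cs_def N2_def by blast
      finally show "(\<Sum>S\<in>A. (\<sigma> S C)^2) = int (card (col_sites f l C)) * int N2" .
    qed
    also have "\<dots> \<le> (\<Sum>C\<in>Cs. int l * int N2)"
      by (intro sum_mono mult_right_mono) (use card_col_sites Cs_def in auto)
    also have "\<dots> = int l * int n * int N2" unfolding n_def by simp
    finally show ?thesis .
  qed
  have step1: "3 * card (A - G) \<le> N2"
  proof -
    let ?m = "int l * int n"
    have "l * n > 0" using l n1 by simp
    then have "int (l * n) \<ge> 1" by linarith
    then have m1: "?m \<ge> 1" by simp
    have "int (card (A - G)) * (3 * ?m + 1) = (\<Sum>S\<in>A - G. 3 * ?m + 1)" by simp
    also have "\<dots> \<le> (\<Sum>S\<in>A - G. \<Sum>C\<in>Cs. (\<sigma> S C)^2)"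
      by (rule sum_mono) (auto simp: G_def)
    also have "\<dots> \<le> (\<Sum>S\<in>A. \<Sum>C\<in>Cs. (\<sigma> S C)^2)"
      by (rule sum_mono2[OF finA]) (auto intro: sum_nonneg)
    also have "\<dots> \<le> ?m * int N2" using tot by simp
    finally have ineq: "int (card (A - G)) * (3 * ?m + 1) \<le> ?m * int N2" .
    have "?m * (3 * int (card (A - G))) \<le> int (card (A - G)) * (3 * ?m + 1)"
      by (simp add: algebra_simps)
    with ineq have "?m * (3 * int (card (A - G))) \<le> ?m * int N2" by linarith
    then have "3 * int (card (A - G)) \<le> int N2"
      using mult_left_le_imp_le[of ?m "3 * int (card (A - G))" "int N2"] m1 by linarith
    then show ?thesis by simp
  qed
  define P where "P = PiE Cs (\<lambda>_. {-int l..int l})"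
  have finP: "finite P" unfolding P_def using finCs by (intro finite_PiE) auto
  have finB: "finite B" using finA unfolding B_def by simp
  have sigP: "\<sigma> ` B \<subseteq> P"
  proof
    fix M assume "M \<in> \<sigma> ` B"
    then obtain S where S: "S \<in> B" "M = \<sigma> S" by blast
    have SA: "S \<in> assignments f l" using S unfolding B_def A_def by simp
    have "\<forall>C\<in>Cs. (\<Sum>i\<in>col_sites f l C. S i) \<in> {-int l..int l}"
    proof
      fix C assume "C \<in> Cs"
      then have "\<bar>\<Sum>i\<in>col_sites f l C. S i\<bar> \<le> int l" using sigma_bound[OF SA] unfolding Cs_def by blast
      then show "(\<Sum>i\<in>col_sites f l C. S i) \<in> {-int l..int l}" by (simp add: abs_le_iff)
    qed
    then show "M \<in> P" unfolding S(2) P_def \<sigma>_def restrict_PiE_iff .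
  qed
  have cardB_le: "real (card {T\<in>B. \<sigma> T = M}) \<le> real N2 * K / w M" if Mh: "M \<in> \<sigma> ` B" for M
  proof -
    obtain S where S: "S \<in> B" "M = \<sigma> S" using Mh by blast
    have c1: "card {T\<in>B. \<sigma> T = M} \<le> card (zero_energy f l M)"
      using ZE_sup[of S] S(2) finZE by (intro card_mono) auto
    have c2: "real (card (zero_energy f l M)) * w M < real N2 * K"
      using S unfolding B_def by simp
    have "real (card {T\<in>B. \<sigma> T = M}) * w M \<le> real (card (zero_energy f l M)) * w M"
      using c1 wpos[of M] by (intro mult_right_mono) auto
    then have "real (card {T\<in>B. \<sigma> T = M}) * w M < real N2 * K" using c2 by linarith
    then show ?thesis using wpos[of M] by (simp add: pos_le_divide_eq less_imp_le)
  qed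
  have sumgg: "(\<Sum>s\<in>{-int l..int l}. gg k s) \<le> 5 * real k" using U_bound[OF k1] .
  have step2: "real (card B) \<le> real N2 / 2"
  proof -
    have "real (card B) = (\<Sum>S\<in>B. (1::real))" by simp
    also have "\<dots> = (\<Sum>M\<in>\<sigma> ` B. \<Sum>T\<in>{T\<in>B. \<sigma> T = M}. (1::real))"
      by (rule sum.image_gen[OF finB])
    also have "\<dots> = (\<Sum>M\<in>\<sigma> ` B. real (card {T\<in>B. \<sigma> T = M}))" by simp
    also have "\<dots> \<le> (\<Sum>M\<in>\<sigma> ` B. real N2 * K / w M)" by (rule sum_mono) (rule cardB_le)
    also have "\<dots> \<le> (\<Sum>M\<in>P. real N2 * K / w M)"
      using sigP finP wpos N2pos Kpos by (intro sum_mono2) (auto intro!: divide_nonneg_pos)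
    also have "\<dots> = real N2 * K * (\<Sum>M\<in>P. \<Prod>C\<in>Cs. gg k (M C))"
    proof -
      have "real N2 * K / w M = real N2 * K * (\<Prod>C\<in>Cs. gg k (M C))" for M
      proof -
        have "(\<Prod>C\<in>Cs. gg k (M C)) = (\<Prod>C\<in>Cs. 1 / h (M C))"
          using gg_inv[OF k1] unfolding h_def by simp
        also have "\<dots> = 1 / w M" unfolding w_def by (simp add: prod_dividef)
        finally show ?thesis by simp
      qed
      then show ?thesis by (simp add: sum_distrib_left)
    qed
    also have "\<dots> = real N2 * K * (\<Prod>C\<in>Cs. \<Sum>s\<in>{-int l..int l}. gg k s)"
      unfolding P_def using finCs by (subst prod_sum_PiE) auto
    also have "\<dots> = real N2 * K * (\<Sum>s\<in>{-int l..int l}. gg k s) ^ n"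
      unfolding n_def by simp
    also have "\<dots> \<le> real N2 * K * (5 * real k) ^ n"
      using N2pos sumgg Kpos by (intro mult_left_mono power_mono) (auto intro: sum_nonneg gg_nonneg)
    also have "\<dots> = real N2 / 2" unfolding K_def using rk1 by simp
    finally show ?thesis .
  qed
  have "A \<subseteq> (A - G) \<union> B \<union> (G - B)" unfolding G_def B_def by auto
  then have "card A \<le> card ((A - G) \<union> B \<union> (G - B))" using finA finB by (intro card_mono) (auto simp: G_def)
  also have "\<dots> \<le> card (A - G) + card B + card (G - B)"
    using card_Un_le[of "A - G \<union> B" "G - B"] card_Un_le[of "A - G" B] by linarith
  finally have "N2 \<le> card (A - G) + card B + card (G - B)" unfolding N2_def .
  then have "real N2 \<le> real (card (A - G)) + real (card B) + real (card (G - B))" by linarith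
  moreover have "real (card (A - G)) \<le> real N2 / 3" using step1 by linarith
  ultimately have "real (card (G - B)) > 0" using step2 N2pos by linarith
  then have "G - B \<noteq> {}" by (intro notI) simp
  then obtain S where S: "S \<in> G" "S \<notin> B" by blast
  define M where "M = \<sigma> S"
  have SA: "S \<in> A" using S unfolding G_def by simp
  have big: "real (card (zero_energy f l M)) * w M \<ge> real N2 * K"
    using S SA unfolding B_def M_def by auto
  have wM: "w M \<le> exp (12 * real n)"
  proof -
    have "w M \<le> exp (\<Sum>C\<in>Cs. (real_of_int (M C))^2 / (real k)^2)"
      unfolding w_def h_def using finCs by (intro prod_exp_bound) auto
    also have "(\<Sum>C\<in>Cs. (real_of_int (M C))^2 / (real k)^2) = real_of_int (\<Sum>C\<in>Cs. (M C)^2) / (real k)^2"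
      by (simp add: sum_divide_distrib)
    also have "\<dots> \<le> (3 * real l * real n) / (real k)^2"
    proof (rule divide_right_mono)
      have "(\<Sum>C\<in>Cs. (M C)^2) \<le> 3 * int l * int n" using S unfolding G_def M_def by simp
      then show "real_of_int (\<Sum>C\<in>Cs. (M C)^2) \<le> 3 * real l * real n"
      proof -
        have "real_of_int (\<Sum>C\<in>Cs. (M C)^2) \<le> real_of_int (3 * int l * int n)"
          using \<open>(\<Sum>C\<in>Cs. (M C)^2) \<le> 3 * int l * int n\<close> by (simp only: of_int_le_iff)
        then show ?thesis by simp
      qed
    qed simp
    also have "\<dots> \<le> 12 * real n"
    proof -
      have "real l * real n \<le> (4 * (real k)^2) * real n" using lk by (intro mult_right_mono) auto
      then have "3 * real l * real n \<le> 12 * real n * (real k)^2" by (simp add: algebra_simps)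
      then show ?thesis using rk1 by (simp add: divide_le_eq)
    qed
    finally show ?thesis by simp
  qed
  have ze1: "real (card (zero_energy f l M)) \<ge> real N2 * K / exp (12 * real n)"
  proof -
    have "real N2 * K / exp (12 * real n) \<le> real N2 * K / w M"
      using wpos[of M] wM N2pos Kpos by (intro divide_left_mono) auto
    also have "\<dots> \<le> real (card (zero_energy f l M))"
      using big wpos[of M] by (simp add: pos_divide_le_eq)
    finally show ?thesis .
  qed
  have e12: "exp (12 * real n) = exp 12 ^ n" using exp_of_nat_mult[of n 12] by (simp add: mult.commute)
  have X: "(c / real k) ^ n \<le> K / exp (12 * real n)"
  proof -
    define X where "X = (5 * real k * exp 12) ^ n"
    have Xpos: "X > 0" unfolding X_def using rk1 by simp
    have "(c / real k) ^ n = 1 / (2 ^ n * X)"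
      using power_mult_distrib[of "2::real" 5 n]
      unfolding c_def X_def by (simp add: power_divide power_mult_distrib field_simps)
    also have "\<dots> \<le> 1 / (2 * X)"
    proof (rule divide_left_mono)
      have "(2::real) \<le> 2 ^ n" using n1 power_increasing[of 1 n "2::real"] by simp
      then show "2 * X \<le> 2 ^ n * X" using Xpos by simp
    qed (use Xpos in auto)
    also have "\<dots> = K / exp (12 * real n)"
      unfolding K_def X_def e12 by (simp add: power_mult_distrib)
    finally show ?thesis .
  qed
  have Y: "(c / (real f * sqrt (real l))) ^ (f * l ^ (f - 1)) \<le> (c / real k) ^ n"
  proof -
    have "(1::real) \<le> exp 12" by simp
    then have "(1::real) \<le> 10 * exp 12" by linarith
    then have c0: "0 < c" "c \<le> 1" unfolding c_def by auto
    have "1 * 1 \<le> real f * sqrt (real l)" using f sl1 by (intro mult_mono) auto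
    then have fs: "1 \<le> real f * sqrt (real l)" by simp
    have b0: "0 \<le> c / (real f * sqrt (real l))" using c0 fs by simp
    have b1: "c / (real f * sqrt (real l)) \<le> 1" using c0 fs by simp
    have "(c / (real f * sqrt (real l))) ^ (f * l ^ (f - 1)) \<le> (c / (real f * sqrt (real l))) ^ n"
      by (rule power_decreasing[OF nE b0 b1])
    also have "\<dots> \<le> (c / real k) ^ n"
    proof (rule power_mono[OF _ b0])
      have "1 * sqrt (real l) \<le> real f * sqrt (real l)" using f by (intro mult_right_mono) auto
      then have "real k \<le> real f * sqrt (real l)" using ksl by simp
      then show "c / (real f * sqrt (real l)) \<le> c / real k"
        using c0 rk1 by (intro divide_left_mono) auto
    qed
    finally show ?thesis .
  qed
  have "2 ^ (l ^ f) * (c / (real f * sqrt (real l))) ^ (f * l ^ (f - 1)) \<le> real N2 * (c / real k) ^ n"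
    using Y N2 by (simp add: mult_left_mono)
  also have "\<dots> \<le> real N2 * (K / exp (12 * real n))" using X N2pos by (intro mult_left_mono) auto
  also have "\<dots> = real N2 * K / exp (12 * real n)" by simp
  also have "\<dots> \<le> real (card (zero_energy f l M))" using ze1 by simp
  finally show ?thesis unfolding c_def by blast
qed


theorem mainTheorem3:
  shows "(\<forall>(f::nat) (l::nat) M. f > 0 \<longrightarrow> l > 0 \<longrightarrow> card (zero_energy f l M) > 0 \<longrightarrow>
            card (global_minima f l M) = card (zero_energy f l M))
       \<and> (\<exists>c::real. c > 0 \<and> (\<forall>(f::nat) (l::nat). f > 0 \<longrightarrow> l > 0 \<longrightarrow>
            (\<exists>M. real (card (zero_energy f l M)) \<ge>
                   2 ^ (l ^ f) * (c / (real f * sqrt (real l))) ^ (f * l ^ (f - 1)))))"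
proof
  show "\<forall>(f::nat) (l::nat) M. f > 0 \<longrightarrow> l > 0 \<longrightarrow> card (zero_energy f l M) > 0 \<longrightarrow>
            card (global_minima f l M) = card (zero_energy f l M)"
  proof (intro allI impI)
    fix f l :: nat and M assume "f > 0" "l > 0" "card (zero_energy f l M) > 0"
    then have "zero_energy f l M \<noteq> {}" by auto
    then show "card (global_minima f l M) = card (zero_energy f l M)"
      using part1 \<open>l > 0\<close> by simp
  qed
  show "\<exists>c::real. c > 0 \<and> (\<forall>(f::nat) (l::nat). f > 0 \<longrightarrow> l > 0 \<longrightarrow>
            (\<exists>M. real (card (zero_energy f l M)) \<ge>
                   2 ^ (l ^ f) * (c / (real f * sqrt (real l))) ^ (f * l ^ (f - 1))))"
  proof (rule exI[of _ "1 / (10 * exp 12)"], intro conjI allI impI)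
    show "(0::real) < 1 / (10 * exp 12)" by simp
    fix f l :: nat assume "f > 0" "l > 0"
    then show "\<exists>M. real (card (zero_energy f l M)) \<ge>
                   2 ^ (l ^ f) * ((1 / (10 * exp 12)) / (real f * sqrt (real l))) ^ (f * l ^ (f - 1))"
      by (rule part2)
  qed
qed

end
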